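(* For strictly positive formulas $A,B$: (i) $A\vdash_{\mathbf{RJ}}B$ iff $\mathrm{RJ}_S[A]\Vdash B$, where $S=\ell(A)$; (ii) $A\vdash_{\mathbf{RC}}B$ iff $\mathrm{RC}_S[A]\Vdash B$, where $S=\ell(\{A,B\})$. Here $\Vdash$ means truth at the root.
   Context: Strictly positive formulas: $A::= p\mid \top\mid (A\land B)\mid \alpha A$, $\alpha\le\omega$; $\ell(X)$ is the set of modalities occurring in formulas of $X$. $\mathbf{RJ}$: $A\vdash A$; $A\vdash\top$; cut; $A\land B\vdash A$; $A\land B\vdash B$; from $A\vdash B$, $A\vdash C$ infer $A\vdash B\land C$; from $A\vdash B$ infer $\alpha A\vdash\alpha B$; $\alpha\alpha A\vdash\alpha A$; $\alpha\beta A\vdash\beta A$, $\beta\alpha A\vdash\beta A$ for $\alpha\ge\beta$; $\alpha A\land\beta B\vdash\alpha(A\land\beta B)$ for $\alpha>\beta$. $\mathbf{RC}=\mathbf{RJ}+\{\alpha A\vdash\beta A:\alpha>\beta\}$. Kripke models of signature $S$: $W$, relations $(R_\alpha)_{\alpha\in S}$, valuation, usual forcing with $x\Vdash\alpha A$ iff $\exists y(xR_\alpha y\wedge y\Vdash A)$. RJ$_S$-frame: $R_\alpha R_\beta\subseteq R_{\min(\alpha,\beta)}$ for $\alpha,\beta\in S$, and for $\alpha>\beta$ in $S$, $xR_\alpha y\wedge xR_\beta z\Rightarrow yR_\beta z$. RC$_S$-frame: RJ$_S$-frame with $R_\alpha\subseteq R_\beta$ for $\beta<\alpha$. The canonical tree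 $T[A]$: for a variable or $\top$, one node with empty relations where only that variable is true; $T[B\land C]$: disjoint union of $T[B],T[C]$ with roots identified, a variable true at the root iff true at either root; $T[\alpha B]$: $T[B]$ plus a new root $r$ (all variables false) with $rR_\alpha$(root of $T[B]$). For $S\supseteq\ell(A)$, $\mathrm{RJ}_S[A]$ (resp. $\mathrm{RC}_S[A]$) is the model on the same set and valuation as $T[A]$ whose relations are the least relations containing those of $T[A]$ (relations for $\alpha\in S\setminus\ell(A)$ starting empty) forming an RJ$_S$-frame (resp. RC$_S$-frame). *)

theory Defs
  imports Main "HOL-Library.Extended_Nat"
begin

text \<open>Strictly positive formulas; modalities are ordinals \<open>\<le> \<omega>\<close>, i.e. elements of enat
  (\<open>\<infinity>\<close> plays the role of \<open>\<omega>\<close>).\<close>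
datatype 'p fm = Var 'p | Top | Conj "'p fm" "'p fm" | Dia enat "'p fm"

primrec mods :: "'p fm \<Rightarrow> enat set" where
  "mods (Var p) = {}"
| "mods Top = {}"
| "mods (Conj A B) = mods A \<union> mods B"
| "mods (Dia a A) = insert a (mods A)"

inductive RJ :: "'p fm \<Rightarrow> 'p fm \<Rightarrow> bool" where
  rj_refl: "RJ A A"
| rj_top: "RJ A Top"
| rj_cut: "RJ A B \<Longrightarrow> RJ B C \<Longrightarrow> RJ A C"
| rj_conjE1: "RJ (Conj A B) A"
| rj_conjE2: "RJ (Conj A B) B"
| rj_conjI: "RJ A B \<Longrightarrow> RJ A C \<Longrightarrow> RJ A (Conj B C)"
| rj_mono: "RJ A B \<Longrightarrow> RJ (Dia a A) (Dia a B)"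
| rj_trans: "RJ (Dia a (Dia a A)) (Dia a A)"
| rj_mon1: "a \<ge> b \<Longrightarrow> RJ (Dia a (Dia b A)) (Dia b A)"
| rj_mon2: "a \<ge> b \<Longrightarrow> RJ (Dia b (Dia a A)) (Dia b A)"
| rj_J: "a > b \<Longrightarrow> RJ (Conj (Dia a A) (Dia b B)) (Dia a (Conj A (Dia b B)))"

inductive RC :: "'p fm \<Rightarrow> 'p fm \<Rightarrow> bool" where
  rc_refl: "RC A A"
| rc_top: "RC A Top"
| rc_cut: "RC A B \<Longrightarrow> RC B C \<Longrightarrow> RC A C"
| rc_conjE1: "RC (Conj A B) A"
| rc_conjE2: "RC (Conj A B) B"
| rc_conjI: "RC A B \<Longrightarrow> RC A C \<Longrightarrow> RC A (Conj B C)"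
| rc_mono: "RC A B \<Longrightarrow> RC (Dia a A) (Dia a B)"
| rc_trans: "RC (Dia a (Dia a A)) (Dia a A)"
| rc_mon1: "a \<ge> b \<Longrightarrow> RC (Dia a (Dia b A)) (Dia b A)"
| rc_mon2: "a \<ge> b \<Longrightarrow> RC (Dia b (Dia a A)) (Dia b A)"
| rc_J: "a > b \<Longrightarrow> RC (Conj (Dia a A) (Dia b B)) (Dia a (Conj A (Dia b B)))"
| rc_C: "a > b \<Longrightarrow> RC (Dia a A) (Dia b A)"

primrec forces :: "(enat \<Rightarrow> ('w \<times> 'w) set) \<Rightarrow> ('p \<Rightarrow> 'w set) \<Rightarrow> 'w \<Rightarrow> 'p fm \<Rightarrow> bool" where
  "forces R V x (Var p) = (x \<in> V p)"
| "forces R V x Top = True"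
| "forces R V x (Conj A B) = (forces R V x A \<and> forces R V x B)"
| "forces R V x (Dia a A) = (\<exists>y. (x, y) \<in> R a \<and> forces R V y A)"

definition RJ_frame :: "enat set \<Rightarrow> (enat \<Rightarrow> ('w \<times> 'w) set) \<Rightarrow> bool" where
  "RJ_frame S R \<longleftrightarrow>
     (\<forall>a\<in>S. \<forall>b\<in>S. R a O R b \<subseteq> R (min a b)) \<and>
     (\<forall>a\<in>S. \<forall>b\<in>S. a > b \<longrightarrow> (\<forall>x y z. (x, y) \<in> R a \<and> (x, z) \<in> R b \<longrightarrow> (y, z) \<in> R b))"

definition RC_frame :: "enat set \<Rightarrow> (enat \<Rightarrow> ('w \<times> 'w) set) \<Rightarrow> bool" where
  "RC_frame S R \<longleftrightarrow> RJ_frame S R \<and> (\<forall>a\<in>S. \<forall>b\<in>S. b < a \<longrightarrow> R a \<subseteq> R b)"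

text \<open>Nodes are addresses (lists of directions); the root is \<open>[]\<close>.
  In \<open>T[B \<and> C]\<close> the roots of \<open>T[B]\<close>, \<open>T[C]\<close> are identified with the new root \<open>[]\<close>,
  the other nodes are tagged \<open>L\<close>/\<open>R\<close>. In \<open>T[\<alpha> B]\<close> the nodes of \<open>T[B]\<close> are tagged \<open>D\<close>.\<close>
datatype dir = L | R | D

definition emb :: "dir \<Rightarrow> dir list \<Rightarrow> dir list" where
  "emb d x = (if x = [] then [] else d # x)"

primrec tnodes :: "'p fm \<Rightarrow> dir list set" where
  "tnodes (Var p) = {[]}"
| "tnodes Top = {[]}"
| "tnodes (Conj A B) = emb L ` tnodes A \<union> emb R ` tnodes B"
| "tnodes (Dia a A) = insert [] ((#) D ` tnodes A)"

primrec trel :: "'p fm \<Rightarrow> enat \<Rightarrow> (dir list \<times> dir list) set" where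
  "trel (Var p) b = {}"
| "trel Top b = {}"
| "trel (Conj A B) b = map_prod (emb L) (emb L) ` trel A b \<union> map_prod (emb R) (emb R) ` trel B b"
| "trel (Dia a A) b = (if b = a then {([], [D])} else {}) \<union> map_prod ((#) D) ((#) D) ` trel A b"

primrec tval :: "'p fm \<Rightarrow> 'p \<Rightarrow> dir list set" where
  "tval (Var p) q = (if q = p then {[]} else {})"
| "tval Top q = {}"
| "tval (Conj A B) q = emb L ` tval A q \<union> emb R ` tval B q"
| "tval (Dia a A) q = (#) D ` tval A q"

definition least_rels ::
  "(enat set \<Rightarrow> (enat \<Rightarrow> (dir list \<times> dir list) set) \<Rightarrow> bool) \<Rightarrow> enat set \<Rightarrow> 'p fm
     \<Rightarrow> enat \<Rightarrow> (dir list \<times> dir list) set" where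
  "least_rels P S A a =
     (if a \<in> S then
        \<Inter> {R' a | R'. (\<forall>b\<in>S. trel A b \<subseteq> R' b \<and> R' b \<subseteq> tnodes A \<times> tnodes A) \<and> P S R'}
      else {})"

definition RJ_model_rel :: "enat set \<Rightarrow> 'p fm \<Rightarrow> enat \<Rightarrow> (dir list \<times> dir list) set" where
  "RJ_model_rel S A = least_rels RJ_frame S A"

definition RC_model_rel :: "enat set \<Rightarrow> 'p fm \<Rightarrow> enat \<Rightarrow> (dir list \<times> dir list) set" where
  "RC_model_rel S A = least_rels RC_frame S A"

end

theory Submission
  imports Defs
begin



declare image_cong[fundef_cong]

lemma RJ_RC: "RJ A B \<Longrightarrow> RC A B"
  by (induction rule: RJ.induct) (auto intro: RC.intros)

definition der :: "bool \<Rightarrow> 'p fm \<Rightarrow> 'p fm \<Rightarrow> bool" where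
  "der rc A B = (if rc then RC A B else RJ A B)"

lemma der_refl: "der rc A A" by (simp add: der_def RJ.intros RC.intros)
lemma der_top: "der rc A Top" by (simp add: der_def RJ.intros RC.intros)
lemma der_cut: "der rc A B \<Longrightarrow> der rc B C \<Longrightarrow> der rc A C"
  by (auto simp: der_def split: if_splits intro: RJ.intros RC.intros)
lemma der_conjE1: "der rc (Conj A B) A" by (simp add: der_def RJ.intros RC.intros)
lemma der_conjE2: "der rc (Conj A B) B" by (simp add: der_def RJ.intros RC.intros)
lemma der_conjI: "der rc A B \<Longrightarrow> der rc A C \<Longrightarrow> der rc A (Conj B C)"
  by (auto simp: der_def split: if_splits intro: RJ.intros RC.intros)
lemma der_mono: "der rc A B \<Longrightarrow> der rc (Dia a A) (Dia a B)"
  by (auto simp: der_def split: if_splits intro: RJ.intros RC.intros)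
lemma der_trans: "der rc (Dia a (Dia a A)) (Dia a A)" by (simp add: der_def RJ.intros RC.intros)
lemma der_mon1: "a \<ge> b \<Longrightarrow> der rc (Dia a (Dia b A)) (Dia b A)" by (simp add: der_def RJ.intros RC.intros)
lemma der_mon2: "a \<ge> b \<Longrightarrow> der rc (Dia b (Dia a A)) (Dia b A)" by (simp add: der_def RJ.intros RC.intros)
lemma der_J: "a > b \<Longrightarrow> der rc (Conj (Dia a A) (Dia b B)) (Dia a (Conj A (Dia b B)))"
  by (simp add: der_def RJ.intros RC.intros)
lemma der_C: "a > b \<Longrightarrow> der True (Dia a A) (Dia b A)" by (simp add: der_def RC.intros)

lemma der_cE1: "der rc H (Conj A B) \<Longrightarrow> der rc H A" using der_cut der_conjE1 by blast
lemma der_cE2: "der rc H (Conj A B) \<Longrightarrow> der rc H B" using der_cut der_conjE2 by blast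
lemma der_dmin: "der rc (Dia a (Dia b A)) (Dia (min a b) A)"
  by (cases "a \<ge> b") (auto simp: min_def intro: der_mon1 der_mon2)
lemma der_J': "a > b \<Longrightarrow> der rc H (Dia a A) \<Longrightarrow> der rc H (Dia b B) \<Longrightarrow> der rc H (Dia a (Conj A (Dia b B)))"
  using der_J der_conjI der_cut by blast

definition conjs :: "'p fm list \<Rightarrow> 'p fm" where "conjs xs = foldr Conj xs Top"
definition bigconj :: "'p fm set \<Rightarrow> 'p fm" where "bigconj X = conjs (SOME xs. set xs = X)"

lemma conjs_mem: "f \<in> set xs \<Longrightarrow> der rc (conjs xs) f"
  by (induction xs) (auto simp: conjs_def intro: der_conjE1 der_cut[OF der_conjE2])
lemma conjs_intro: "(\<forall>f\<in>set xs. der rc H f) \<Longrightarrow> der rc H (conjs xs)"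
  by (induction xs) (auto simp: conjs_def intro: der_conjI der_top)
lemma set_some: "finite X \<Longrightarrow> set (SOME xs. set xs = X) = X"
  by (metis (mono_tags, lifting) finite_list someI_ex)
lemma bigconj_mem: "finite X \<Longrightarrow> f \<in> X \<Longrightarrow> der rc (bigconj X) f"
  unfolding bigconj_def using conjs_mem set_some by metis
lemma bigconj_intro: "finite X \<Longrightarrow> (\<forall>f\<in>X. der rc H f) \<Longrightarrow> der rc H (bigconj X)"
  unfolding bigconj_def using conjs_intro set_some by metis

lemma der_assoc: "der rc (Conj (Conj A B) C) (Conj A (Conj B C))"
  by (meson der_cE1 der_cE2 der_conjI der_refl)

lemma J_list: "der rc H (Dia a P) \<Longrightarrow> (\<forall>f\<in>set xs. \<exists>c F. f = Dia c F \<and> c < a \<and> der rc H f)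
   \<Longrightarrow> der rc H (Dia a (Conj P (conjs xs)))"
proof (induction xs arbitrary: P)
  case Nil
  then show ?case unfolding conjs_def using der_cut der_mono der_conjI der_refl der_top
    by (metis foldr.simps(1) id_apply)
next
  case (Cons f xs)
  then obtain c F where f: "f = Dia c F" "c < a" "der rc H f" by auto
  have "der rc H (Dia a (Conj P f))" using der_J' Cons.prems f by blast
  then have "der rc H (Dia a (Conj (Conj P f) (conjs xs)))" using Cons by auto
  then show ?case by (simp add: conjs_def) (meson der_assoc der_cut der_mono)
qed

lemma J_big: "finite X \<Longrightarrow> der rc H (Dia a P) \<Longrightarrow> (\<forall>f\<in>X. \<exists>c F. f = Dia c F \<and> c < a \<and> der rc H f)
   \<Longrightarrow> der rc H (Dia a (Conj P (bigconj X)))"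
  unfolding bigconj_def using J_list set_some by metis

lemma tr_len: "(y,z) \<in> trel A a \<Longrightarrow> length y < length z"
proof (induction A arbitrary: y z)
  case (Conj A1 A2)
  then show ?case apply (auto simp: emb_def split: if_splits)
    by fastforce+
qed (auto split: if_splits)

lemma tr_par: "(x,z) \<in> trel A a \<Longrightarrow> (y,z) \<in> trel A b \<Longrightarrow> x = y \<and> a = b"
proof (induction A arbitrary: x y z)
  case (Conj A1 A2)
  then show ?case
    apply (auto simp: emb_def split: if_splits)
    by (metis less_nat_zero_code list.size(3) tr_len)+
next
  case (Dia c A)
  then show ?case
    apply (auto split: if_splits)
    by (metis less_nat_zero_code list.size(3) tr_len)+
qed auto

lemma tn_root: "[] \<in> tnodes A" by (induction A) (auto simp: emb_def image_iff)

lemma tr_nodes: "(y,z) \<in> trel A a \<Longrightarrow> y \<in> tnodes A \<and> z \<in> tnodes A"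
  by (induction A arbitrary: y z) (auto split: if_splits intro: tn_root)

lemma tr_mods: "(y,z) \<in> trel A a \<Longrightarrow> a \<in> mods A"
  by (induction A arbitrary: y z) (auto split: if_splits)

lemma tn_fin: "finite (tnodes A)" by (induction A) auto
lemma mods_fin: "finite (mods A)" by (induction A) auto
lemma tval_fin: "finite {p. tval A p \<noteq> {}}"
proof (induction A)
  case (Conj A1 A2)
  have "{p. tval (Conj A1 A2) p \<noteq> {}} \<subseteq> {p. tval A1 p \<noteq> {}} \<union> {p. tval A2 p \<noteq> {}}" by auto
  then show ?case using Conj finite_subset by blast
qed auto




inductive tpath :: "'p fm \<Rightarrow> dir list \<Rightarrow> dir list \<Rightarrow> enat list \<Rightarrow> bool" for A where
  tp_nil: "tpath A x x []"
| tp_cons: "(x,y) \<in> trel A a \<Longrightarrow> tpath A y z ls \<Longrightarrow> tpath A x z (a#ls)"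

lemma tpath_nil_iff[simp]: "tpath A x y [] \<longleftrightarrow> x = y"
  by (auto elim: tpath.cases intro: tp_nil)

lemma tpath_app: "tpath A x y l \<Longrightarrow> tpath A y z l' \<Longrightarrow> tpath A x z (l @ l')"
  by (induction rule: tpath.induct) (auto intro: tp_cons)

lemma tpath_snoc: "tpath A x z (ls @ [a]) \<Longrightarrow> \<exists>y. tpath A x y ls \<and> (y,z) \<in> trel A a"
proof (induction ls arbitrary: x)
  case Nil
  then show ?case by (auto elim: tpath.cases)
next
  case (Cons b ls)
  then obtain y where "(x,y) \<in> trel A b" "tpath A y z (ls @ [a])" by (auto elim: tpath.cases)
  then show ?case using Cons.IH tp_cons by blast
qed

lemma tpath_snoc_intro: "tpath A x y ls \<Longrightarrow> (y,z) \<in> trel A a \<Longrightarrow> tpath A x z (ls @ [a])"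
  using tpath_app tp_cons tp_nil by fastforce

lemma tpath_nodes: "tpath A x y l \<Longrightarrow> x \<in> tnodes A \<Longrightarrow> y \<in> tnodes A"
  by (induction rule: tpath.induct) (auto dest: tr_nodes)

lemma tpath_comp:
  "tpath A w x l1 \<Longrightarrow> tpath A w' x l2 \<Longrightarrow>
    (\<exists>l. tpath A w w' l \<and> l1 = l @ l2) \<or> (\<exists>l. tpath A w' w l \<and> l2 = l @ l1)"
proof (induction l1 arbitrary: x l2 rule: rev_induct)
  case Nil
  then show ?case by auto
next
  case (snoc a l1)
  then obtain y where y: "tpath A w y l1" "(y,x) \<in> trel A a" using tpath_snoc by blast
  show ?case
  proof (cases l2 rule: rev_exhaust)
    case Nil
    then show ?thesis using snoc.prems by auto
  next
    case (snoc l2' b)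
    then obtain y' where y': "tpath A w' y' l2'" "(y',x) \<in> trel A b" using snoc.prems tpath_snoc by blast
    then have "y' = y" "b = a" using y tr_par by blast+
    then show ?thesis using snoc.IH[OF y(1)] y' snoc by auto
  qed
qed

lemma tpath_root: "tpath A w [] l \<Longrightarrow> l = []"
  by (cases l rule: rev_exhaust) (auto dest!: tpath_snoc tr_len)





definition good :: "bool \<Rightarrow> enat \<Rightarrow> enat list \<Rightarrow> bool" where
  "good rc c ls \<longleftrightarrow> ls \<noteq> [] \<and> (\<forall>l\<in>set ls. c \<le> l) \<and> (rc \<or> c \<in> set ls)"

definition Chr :: "bool \<Rightarrow> enat set \<Rightarrow> 'p fm \<Rightarrow> enat \<Rightarrow> (dir list \<times> dir list) set" where
  "Chr rc S A c = {(y,u). c \<in> S \<and> (\<exists>w l1 l2. w \<in> tnodes A \<and> tpath A w y l1 \<and> (\<forall>l\<in>set l1. c < l)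
      \<and> tpath A w u l2 \<and> good rc c l2)}"

lemma good_weaken: "good rc b q \<Longrightarrow> c \<le> b \<Longrightarrow> (c = b \<or> rc) \<Longrightarrow> good rc c q"
  unfolding good_def by (auto intro: order_trans)

lemma Chr_comp:
  assumes "a \<in> S" "b \<in> S" "(x,y) \<in> Chr rc S A a" "(y,z) \<in> Chr rc S A b"
  shows "(x,z) \<in> Chr rc S A (min a b)"
proof -
  obtain w1 p1 q1 where 1: "w1 \<in> tnodes A" "tpath A w1 x p1" "\<forall>l\<in>set p1. a < l" "tpath A w1 y q1" "good rc a q1"
    using assms(3) unfolding Chr_def by blast
  obtain w2 p2 q2 where 2: "w2 \<in> tnodes A" "tpath A w2 y p2" "\<forall>l\<in>set p2. b < l" "tpath A w2 z q2" "good rc b q2"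
    using assms(4) unfolding Chr_def by blast
  have mS: "min a b \<in> S" using assms by (simp add: min_def)
  have q1: "\<forall>v\<in>set q1. a \<le> v" "rc \<or> a \<in> set q1" using 1(5) unfolding good_def by blast+
  have q2: "\<forall>v\<in>set q2. b \<le> v" "rc \<or> b \<in> set q2" "q2 \<noteq> []" using 2(5) unfolding good_def by blast+
  have p1m: "\<forall>v\<in>set p1. min a b < v" using 1(3) by (simp add: min_less_iff_disj)
  from tpath_comp[OF 1(4) 2(2)] show ?thesis
  proof
    assume "\<exists>l. tpath A w1 w2 l \<and> q1 = l @ p2"
    then obtain l where l: "tpath A w1 w2 l" "q1 = l @ p2" by blast
    have ge: "\<forall>v\<in>set (l@q2). min a b \<le> v" using q1(1) q2(1) l(2) by (auto simp add: min_le_iff_disj)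
    have "rc \<or> min a b \<in> set (l@q2)"
    proof (cases "b \<le> a")
      case True then show ?thesis using q2(2) by (auto simp add: min_def)
    next
      case False
      then have "a \<notin> set p2" using 2(3) by (meson linorder_not_le not_less_iff_gr_or_eq order.strict_trans)
      then show ?thesis using q1(2) l(2) False by (auto simp add: min_def)
    qed
    then have g: "good rc (min a b) (l @ q2)" using ge q2(3) unfolding good_def by simp
    show ?thesis unfolding Chr_def using mS 1(1,2) p1m g tpath_app[OF l(1) 2(4)] by blast
  next
    assume "\<exists>l. tpath A w2 w1 l \<and> p2 = l @ q1"
    then obtain l where l: "tpath A w2 w1 l" "p2 = l @ q1" by blast
    have g: "good rc (min a b) q2"
    proof (rule good_weaken[OF 2(5)])
      show "min a b \<le> b" by simp
      show "min a b = b \<or> rc"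
      proof (cases "b \<le> a")
        case False
        have "rc"
        proof (rule ccontr)
          assume "\<not> rc"
          then have "a \<in> set p2" using q1(2) l(2) by simp
          then show False using 2(3) False by (meson less_imp_le)
        qed
        then show ?thesis by simp
      qed (simp add: min_def)
    qed
    have "\<forall>v\<in>set (l@p1). min a b < v" using p1m 2(3) l(2) by (auto simp add: min_less_iff_disj)
    then show ?thesis unfolding Chr_def using mS 2(1,4) g tpath_app[OF l(1) 1(2)] by blast
  qed
qed

lemma Chr_J:
  assumes "a \<in> S" "b \<in> S" "a > b" "(x,y) \<in> Chr rc S A a" "(x,z) \<in> Chr rc S A b"
  shows "(y,z) \<in> Chr rc S A b"
proof -
  obtain w1 p1 q1 where 1: "w1 \<in> tnodes A" "tpath A w1 x p1" "\<forall>l\<in>set p1. a < l" "tpath A w1 y q1" "good rc a q1"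
    using assms(4) unfolding Chr_def by blast
  obtain w2 p2 q2 where 2: "w2 \<in> tnodes A" "tpath A w2 x p2" "\<forall>l\<in>set p2. b < l" "tpath A w2 z q2" "good rc b q2"
    using assms(5) unfolding Chr_def by blast
  have q1: "\<forall>v\<in>set q1. b < v" using 1(5) assms(3) unfolding good_def by (meson less_le_trans)
  have p1: "\<forall>v\<in>set p1. b < v" using 1(3) assms(3) by (meson less_trans)
  from tpath_comp[OF 1(2) 2(2)] show ?thesis
  proof
    assume "\<exists>l. tpath A w1 w2 l \<and> p1 = l @ p2"
    then obtain l where l: "tpath A w1 w2 l" "p1 = l @ p2" by blast
    have "\<forall>v\<in>set l. b \<le> v" using p1 l(2) by (simp add: less_imp_le)
    then have "good rc b (l @ q2)" using 2(5) unfolding good_def by auto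
    then show ?thesis unfolding Chr_def using assms(2) 1(1,4) q1 tpath_app[OF l(1) 2(4)] by blast
  next
    assume "\<exists>l. tpath A w2 w1 l \<and> p2 = l @ p1"
    then obtain l where l: "tpath A w2 w1 l" "p2 = l @ p1" by blast
    have "\<forall>v\<in>set (l @ q1). b < v" using q1 2(3) l(2) by auto
    then show ?thesis unfolding Chr_def using assms(2) 2(1,4,5) tpath_app[OF l(1) 1(4)] by blast
  qed
qed

lemma Chr_mono: "b < a \<Longrightarrow> b \<in> S \<Longrightarrow> (x,y) \<in> Chr True S A a \<Longrightarrow> (x,y) \<in> Chr True S A b"
proof -
  assume ba: "b < a" "b \<in> S" "(x,y) \<in> Chr True S A a"
  then obtain w1 p1 q1 where 1: "w1 \<in> tnodes A" "tpath A w1 x p1" "\<forall>l\<in>set p1. a < l" "tpath A w1 y q1" "good True a q1"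
    unfolding Chr_def by blast
  have "\<forall>l\<in>set p1. b < l" using 1(3) ba(1) by (meson less_trans)
  moreover have "good True b q1" using 1(5) ba(1) good_weaken less_imp_le by blast
  ultimately show ?thesis unfolding Chr_def using ba(2) 1(1,2,4) by blast
qed

lemma Chr_RJ: "RJ_frame S (Chr rc S A)"
proof -
  have 1: "\<forall>a\<in>S. \<forall>b\<in>S. Chr rc S A a O Chr rc S A b \<subseteq> Chr rc S A (min a b)"
  proof (intro ballI subsetI)
    fix a b p assume ab: "a \<in> S" "b \<in> S" and p: "p \<in> Chr rc S A a O Chr rc S A b"
    from p obtain x y z where "p = (x,z)" "(x,y) \<in> Chr rc S A a" "(y,z) \<in> Chr rc S A b" by blast
    then show "p \<in> Chr rc S A (min a b)" using Chr_comp[OF ab] by simp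
  qed
  have 2: "\<forall>a\<in>S. \<forall>b\<in>S. a > b \<longrightarrow> (\<forall>x y z. (x, y) \<in> Chr rc S A a \<and> (x, z) \<in> Chr rc S A b \<longrightarrow> (y, z) \<in> Chr rc S A b)"
  proof (intro ballI allI impI)
    fix a b x y z assume "a \<in> S" "b \<in> S" "a > b" "(x, y) \<in> Chr rc S A a \<and> (x, z) \<in> Chr rc S A b"
    then show "(y, z) \<in> Chr rc S A b" using Chr_J[of a S b x y rc A z] by simp
  qed
  show ?thesis unfolding RJ_frame_def using 1 2 by simp
qed

lemma Chr_RC: "RC_frame S (Chr True S A)"
proof -
  have "\<forall>a\<in>S. \<forall>b\<in>S. b < a \<longrightarrow> Chr True S A a \<subseteq> Chr True S A b"
  proof (intro ballI impI subsetI)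
    fix a b p assume "a \<in> S" "b \<in> S" "b < a" "p \<in> Chr True S A a"
    then show "p \<in> Chr True S A b" using Chr_mono by (cases p) simp
  qed
  then show ?thesis unfolding RC_frame_def using Chr_RJ by simp
qed

lemma Chr_nodes: "(x,y) \<in> Chr rc S A c \<Longrightarrow> x \<in> tnodes A \<and> y \<in> tnodes A"
  unfolding Chr_def using tpath_nodes by blast

lemma Chr_trel: "c \<in> S \<Longrightarrow> trel A c \<subseteq> Chr rc S A c"
proof
  fix p assume "c \<in> S" "p \<in> trel A c"
  then obtain y z where "p = (y,z)" "(y,z) \<in> trel A c" by (cases p) auto
  have "tpath A y z [c]" using \<open>(y,z) \<in> trel A c\<close> tp_cons tp_nil by blast
  moreover have "good rc c [c]" by (simp add: good_def)
  moreover have "y \<in> tnodes A" using tr_nodes \<open>(y,z) \<in> trel A c\<close> by blast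
  ultimately show "p \<in> Chr rc S A c" unfolding Chr_def using \<open>c \<in> S\<close> \<open>p = (y,z)\<close> tp_nil
    by fastforce
qed




definition hgt :: "'p fm \<Rightarrow> nat" where "hgt A = Max (length ` tnodes A)"
lemma len_le_hgt: "z \<in> tnodes A \<Longrightarrow> length z \<le> hgt A"
  unfolding hgt_def by (rule Max_ge) (auto simp: tn_fin)

function thn :: "(dir list \<Rightarrow> 'p fm) \<Rightarrow> 'p fm \<Rightarrow> dir list \<Rightarrow> 'p fm" where
 "thn G A y = Conj (Conj (bigconj (Var ` {p. y \<in> tval A p}))
      (bigconj ((\<lambda>(a,z). Dia a (thn G A z)) ` {(a,z). (y,z) \<in> trel A a}))) (G y)"
  by auto
termination
proof (relation "measure (\<lambda>(G,A,y). hgt A - length y)")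
  fix G :: "dir list \<Rightarrow> 'p fm" and A y x a z
  assume "x \<in> {(a,z). (y,z) \<in> trel A a}" "(a,z) = x"
  then have "(y,z) \<in> trel A a" by auto
  then have "length y < length z" "length z \<le> hgt A" using tr_len tr_nodes len_le_hgt by blast+
  then show "((G, A, z), G, A, y) \<in> measure (\<lambda>(G, A, y). hgt A - length y)" by auto
qed auto

declare thn.simps[simp del]

lemma fin_vars: "finite {p. y \<in> tval A p}"
  using tval_fin by (rule finite_subset[rotated]) auto
lemma fin_ch: "finite {(a,z). (y,z) \<in> trel A a}"
proof -
  have "{(a,z). (y,z) \<in> trel A a} \<subseteq> mods A \<times> tnodes A" using tr_mods tr_nodes by blast
  then show ?thesis using mods_fin tn_fin finite_subset by blast
qed

lemma thn_p1: "der rc (thn G A y) (bigconj (Var ` {p. y \<in> tval A p}))"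
  by (subst thn.simps) (rule der_cut[OF der_conjE1 der_conjE1])
lemma thn_p2: "der rc (thn G A y) (bigconj ((\<lambda>(a,z). Dia a (thn G A z)) ` {(a,z). (y,z) \<in> trel A a}))"
  by (subst thn.simps) (rule der_cut[OF der_conjE1 der_conjE2])
lemma thn_G: "der rc (thn G A y) (G y)"
  by (subst thn.simps) (rule der_conjE2)

lemma thn_var: "y \<in> tval A p \<Longrightarrow> der rc (thn G A y) (Var p)"
  by (rule der_cut[OF thn_p1 bigconj_mem[OF finite_imageI[OF fin_vars]]]) simp

lemma thn_ch: "(y,z) \<in> trel A a \<Longrightarrow> der rc (thn G A y) (Dia a (thn G A z))"
proof -
  assume "(y,z) \<in> trel A a"
  then have "Dia a (thn G A z) \<in> (\<lambda>(a,z). Dia a (thn G A z)) ` {(a,z). (y,z) \<in> trel A a}" by force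
  then show ?thesis by (rule der_cut[OF thn_p2 bigconj_mem[OF finite_imageI[OF fin_ch]]])
qed

lemma thn_path: "tpath A y u l \<Longrightarrow> l \<noteq> [] \<Longrightarrow> der rc (thn G A y) (Dia (Min (set l)) (thn G A u))"
proof (induction rule: tpath.induct)
  case (tp_nil x)
  then show ?case by simp
next
  case (tp_cons x y a z ls)
  show ?case
  proof (cases "ls = []")
    case True
    then show ?thesis using tp_cons(2) thn_ch[OF tp_cons(1)] by simp
  next
    case False
    have "der rc (thn G A x) (Dia a (Dia (Min (set ls)) (thn G A z)))"
      by (rule der_cut[OF thn_ch[OF tp_cons(1)] der_mono[OF tp_cons.IH[OF False]]])
    then have "der rc (thn G A x) (Dia (min a (Min (set ls))) (thn G A z))"
      by (rule der_cut[OF _ der_dmin])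
    then show ?thesis using False by (simp add: Min_insert)
  qed
qed

lemma thn_out: "tpath A y u l \<Longrightarrow> good rc c l \<Longrightarrow> der rc (thn G A y) (Dia c (thn G A u))"
proof -
  assume p: "tpath A y u l" and g: "good rc c l"
  then have l: "l \<noteq> []" by (simp add: good_def)
  have 1: "der rc (thn G A y) (Dia (Min (set l)) (thn G A u))" using thn_path p l by blast
  have le: "c \<le> Min (set l)" using g l by (simp add: good_def)
  have "rc \<or> c = Min (set l)" using g l le unfolding good_def by (metis Min_le antisym finite_set)
  show ?thesis
  proof (cases "c = Min (set l)")
    case True then show ?thesis using 1 by simp
  next
    case False
    then have r: "rc" "c < Min (set l)" using le \<open>rc \<or> _\<close> by auto
    have "der True (Dia (Min (set l)) (thn G A u)) (Dia c (thn G A u))" using der_C r(2) by blast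
    then show ?thesis using 1 r(1) der_cut by simp
  qed
qed

lemma thn_mono: "(\<forall>y. der rc (G y) (G' y)) \<Longrightarrow> der rc (thn G A y) (thn G' A y)"
proof (induction G A y rule: thn.induct)
  case (1 G A y)
  have ch: "der rc (thn G A y) (bigconj ((\<lambda>(a,z). Dia a (thn G' A z)) ` {(a,z). (y,z) \<in> trel A a}))"
  proof (rule bigconj_intro[OF finite_imageI[OF fin_ch]], safe)
    fix a z assume e: "(y,z) \<in> trel A a"
    then have "der rc (thn G A z) (thn G' A z)" using 1 by blast
    then show "der rc (thn G A y) (Dia a (thn G' A z))"
      by (rule der_cut[OF thn_ch[OF e] der_mono])
  qed
  show ?case
    apply (subst (2) thn.simps)
    apply (rule der_conjI)+
      apply (rule thn_p1)
     apply (rule ch)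
    apply (rule der_cut[OF thn_G]) using 1(2) apply blast
    done
qed

fun sub :: "'p fm \<Rightarrow> dir list \<Rightarrow> 'p fm" where
  "sub (Conj B C) (L#y) = sub B y"
| "sub (Conj B C) (R#y) = sub C y"
| "sub (Dia a B) (D#y) = sub B y"
| "sub F y = F"

lemma sub_root[simp]: "sub A [] = A" by (cases A) auto

lemma sub_embL: "y \<noteq> [] \<Longrightarrow> sub (Conj B C) (emb L y) = sub B y"
  by (simp add: emb_def)
lemma sub_embR: "y \<noteq> [] \<Longrightarrow> sub (Conj B C) (emb R y) = sub C y"
  by (simp add: emb_def)
lemma emb_nil: "emb d [] = []" by (simp add: emb_def)

lemma subL: "der rc (sub B y) F \<Longrightarrow> der rc (sub (Conj B C) (emb L y)) F"
  by (cases "y = []") (simp_all add: sub_embL emb_nil der_cut[OF der_conjE1])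
lemma subR: "der rc (sub C y) F \<Longrightarrow> der rc (sub (Conj B C) (emb R y)) F"
  by (cases "y = []") (simp_all add: sub_embR emb_nil der_cut[OF der_conjE2])

lemma sub_var: "y \<in> tval A p \<Longrightarrow> der rc (sub A y) (Var p)"
proof (induction A arbitrary: y)
  case (Var q) then show ?case by (auto split: if_splits intro: der_refl)
next
  case (Conj B C)
  from Conj.prems show ?case
  proof auto
    fix x assume "x \<in> tval B p"
    then show "der rc (sub (Conj B C) (emb L x)) (Var p)" by (rule subL[OF Conj.IH(1)])
  next
    fix x assume "x \<in> tval C p"
    then show "der rc (sub (Conj B C) (emb R x)) (Var p)" by (rule subR[OF Conj.IH(2)])
  qed
qed auto

lemma tr_tgt: "(y,z) \<in> trel A a \<Longrightarrow> z \<noteq> []"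
  using tr_len by fastforce

lemma sub_ch: "(y,z) \<in> trel A a \<Longrightarrow> der rc (sub A y) (Dia a (sub A z))"
proof (induction A arbitrary: y z)
  case (Conj B C)
  from Conj.prems show ?case
  proof (auto)
    fix y' z' assume e: "(y',z') \<in> trel B a"
    show "der rc (sub (Conj B C) (emb L y')) (Dia a (sub (Conj B C) (emb L z')))"
      using subL[where C=C, OF Conj.IH(1)[OF e]] sub_embL[where B=B and C=C, OF tr_tgt[OF e]] by simp
  next
    fix y' z' assume e: "(y',z') \<in> trel C a"
    show "der rc (sub (Conj B C) (emb R y')) (Dia a (sub (Conj B C) (emb R z')))"
      using subR[where B=B, OF Conj.IH(2)[OF e]] sub_embR[where B=B and C=C, OF tr_tgt[OF e]] by simp
  qed
next
  case (Dia b B)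
  then show ?case by (auto split: if_splits intro: der_refl)
qed auto




definition Inh :: "bool \<Rightarrow> enat set \<Rightarrow> 'p fm \<Rightarrow> dir list \<Rightarrow> (enat \<times> dir list) set" where
  "Inh rc S A y = {(c,u). c \<in> S \<and> (\<exists>w l1 l2. w \<in> tnodes A \<and> tpath A w y l1 \<and> l1 \<noteq> [] \<and>
      (\<forall>l\<in>set l1. c < l) \<and> tpath A w u l2 \<and> good rc c l2)}"

lemma Inh_fin: "finite S \<Longrightarrow> finite (Inh rc S A y)"
proof -
  assume f: "finite S"
  have "Inh rc S A y \<subseteq> S \<times> tnodes A" unfolding Inh_def using tpath_nodes by blast
  then show ?thesis using f tn_fin finite_subset by blast
qed

lemma Inh_root: "Inh rc S A [] = {}"
  unfolding Inh_def using tpath_root by blast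

lemma Inh_dec:
  assumes "(c,u) \<in> Inh rc S A z" "(x,z) \<in> trel A a"
  shows "c < a \<and> ((c,u) \<in> Inh rc S A x \<or> (c \<in> S \<and> (\<exists>l. tpath A x u l \<and> good rc c l)))"
proof -
  obtain w l1 l2 where w: "c \<in> S" "w \<in> tnodes A" "tpath A w z l1" "l1 \<noteq> []" "\<forall>l\<in>set l1. c < l"
      "tpath A w u l2" "good rc c l2"
    using assms(1) unfolding Inh_def by blast
  obtain l1' a' where l1: "l1 = l1' @ [a']" using w(4) by (cases l1 rule: rev_exhaust) auto
  obtain y' where y': "tpath A w y' l1'" "(y',z) \<in> trel A a'" using tpath_snoc w(3) l1 by blast
  have eq: "y' = x" "a' = a" using tr_par[OF y'(2) assms(2)] by auto
  have ca: "c < a" using w(5) l1 eq by simp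
  show ?thesis
  proof (cases "l1' = []")
    case True
    then have "w = x" using y'(1) eq by simp
    then show ?thesis using ca w by blast
  next
    case False
    then have "(c,u) \<in> Inh rc S A x" unfolding Inh_def using w l1 y'(1) eq by auto
    then show ?thesis using ca by blast
  qed
qed

primrec Gs :: "bool \<Rightarrow> enat set \<Rightarrow> 'p fm \<Rightarrow> nat \<Rightarrow> dir list \<Rightarrow> 'p fm" where
  "Gs rc S A 0 = (\<lambda>y. Top)"
| "Gs rc S A (Suc n) = (\<lambda>y. bigconj ((\<lambda>(c,u). Dia c (thn (Gs rc S A n) A u)) ` Inh rc S A y))"

lemma Gs_Suc: "Gs rc S A (Suc n) y = bigconj ((\<lambda>(c,u). Dia c (thn (Gs rc S A n) A u)) ` Inh rc S A y)"
  by simp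
declare Gs.simps(2)[simp del]

lemma big_mono:
  assumes "finite X" "\<forall>u. der rc (thn G A u) (thn G' A u)"
  shows "der rc (bigconj ((\<lambda>(c,u). Dia c (thn G A u)) ` X)) (bigconj ((\<lambda>(c,u). Dia c (thn G' A u)) ` X))"
proof (rule bigconj_intro[OF finite_imageI[OF assms(1)]], rule ballI)
  fix f assume "f \<in> (\<lambda>(c,u). Dia c (thn G' A u)) ` X"
  then obtain c u where cu: "(c,u) \<in> X" and fe: "f = Dia c (thn G' A u)" by auto
  then have "Dia c (thn G A u) \<in> (\<lambda>(c,u). Dia c (thn G A u)) ` X" by force
  then have "der rc (bigconj ((\<lambda>(c,u). Dia c (thn G A u)) ` X)) (Dia c (thn G A u))"
    by (rule bigconj_mem[OF finite_imageI[OF assms(1)]])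
  then show "der rc (bigconj ((\<lambda>(c,u). Dia c (thn G A u)) ` X)) f"
    unfolding fe using der_cut der_mono assms(2) by blast
qed

lemma Gs_mono: "finite S \<Longrightarrow> der rc (Gs rc S A (Suc n) y) (Gs rc S A n y)"
proof (induction n arbitrary: y)
  case 0
  then show ?case by (simp add: der_top)
next
  case (Suc n)
  have tm: "\<forall>u. der rc (thn (Gs rc S A (Suc n)) A u) (thn (Gs rc S A n) A u)"
    using thn_mono Suc by blast
  show ?case
    unfolding Gs_Suc[of rc S A "Suc n" y] Gs_Suc[of rc S A n y]
    by (rule big_mono[OF Inh_fin[OF Suc.prems] tm])
qed

lemma claim_gen:
  "(\<forall>x z a. (x,z) \<in> trel A a \<longrightarrow> der rc (Conj (sub A x) (G x)) (Dia a (Conj (sub A z) (G z))))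
   \<Longrightarrow> der rc (Conj (sub A y) (G y)) (thn G A y)"
proof (induction G A y rule: thn.induct)
  case (1 G A y)
  have v: "der rc (Conj (sub A y) (G y)) (bigconj (Var ` {p. y \<in> tval A p}))"
  proof (rule bigconj_intro[OF finite_imageI[OF fin_vars]], safe)
    fix p assume "y \<in> tval A p"
    then show "der rc (Conj (sub A y) (G y)) (Var p)" by (rule der_cut[OF der_conjE1 sub_var])
  qed
  have ch: "der rc (Conj (sub A y) (G y)) (bigconj ((\<lambda>(a,z). Dia a (thn G A z)) ` {(a,z). (y,z) \<in> trel A a}))"
  proof (rule bigconj_intro[OF finite_imageI[OF fin_ch]], safe)
    fix a z assume e: "(y,z) \<in> trel A a"
    have ih: "der rc (Conj (sub A z) (G z)) (thn G A z)" using 1 e by blast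
    have "der rc (Conj (sub A y) (G y)) (Dia a (Conj (sub A z) (G z)))" using 1(2) e by blast
    then show "der rc (Conj (sub A y) (G y)) (Dia a (thn G A z))" by (rule der_cut[OF _ der_mono[OF ih]])
  qed
  show ?case
    apply (subst thn.simps)
    apply (rule der_conjI)+
      apply (rule v)
     apply (rule ch)
    apply (rule der_conjE2)
    done
qed

lemma claim: "finite S \<Longrightarrow> der rc (Conj (sub A y) (Gs rc S A n y)) (thn (Gs rc S A n) A y)"
proof (induction n arbitrary: y)
  case 0
  show ?case
  proof (rule claim_gen, intro allI impI)
    fix x z a assume e: "(x,z) \<in> trel A a"
    have "der rc (sub A z) (Conj (sub A z) (Gs rc S A 0 z))" by (simp add: der_conjI der_refl der_top)
    then have "der rc (sub A x) (Dia a (Conj (sub A z) (Gs rc S A 0 z)))"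
      by (rule der_cut[OF sub_ch[OF e] der_mono])
    then show "der rc (Conj (sub A x) (Gs rc S A 0 x)) (Dia a (Conj (sub A z) (Gs rc S A 0 z)))"
      by (rule der_cut[OF der_conjE1])
  qed
next
  case (Suc m)
  show ?case
  proof (rule claim_gen, intro allI impI)
    fix x z a assume e: "(x,z) \<in> trel A a"
    let ?H = "Conj (sub A x) (Gs rc S A (Suc m) x)"
    let ?f = "\<lambda>(c,u). Dia c (thn (Gs rc S A m) A u)"
    have 1: "der rc ?H (Dia a (sub A z))" by (rule der_cut[OF der_conjE1 sub_ch[OF e]])
    have 2: "\<forall>f\<in>?f ` Inh rc S A z. \<exists>c F. f = Dia c F \<and> c < a \<and> der rc ?H f"
    proof (rule ballI)
      fix f assume "f \<in> ?f ` Inh rc S A z"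
      then obtain c u where cu: "(c,u) \<in> Inh rc S A z" and fe: "f = Dia c (thn (Gs rc S A m) A u)" by auto
      have dec: "c < a \<and> ((c,u) \<in> Inh rc S A x \<or> (c \<in> S \<and> (\<exists>l. tpath A x u l \<and> good rc c l)))"
        using Inh_dec[OF cu e] .
      have "der rc ?H (Dia c (thn (Gs rc S A m) A u))"
      proof (cases "(c,u) \<in> Inh rc S A x")
        case True
        then have "Dia c (thn (Gs rc S A m) A u) \<in> ?f ` Inh rc S A x" by force
        then have "der rc (Gs rc S A (Suc m) x) (Dia c (thn (Gs rc S A m) A u))"
          unfolding Gs_Suc by (rule bigconj_mem[OF finite_imageI[OF Inh_fin[OF Suc.prems]]])
        then show ?thesis by (rule der_cut[OF der_conjE2])
      next
        case False
        then obtain l where l: "tpath A x u l" "good rc c l" using dec by blast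
        have "der rc ?H (Conj (sub A x) (Gs rc S A m x))"
          by (rule der_conjI[OF der_conjE1 der_cut[OF der_conjE2 Gs_mono[OF Suc.prems]]])
        then have "der rc ?H (thn (Gs rc S A m) A x)" by (rule der_cut[OF _ Suc.IH[OF Suc.prems]])
        then show ?thesis by (rule der_cut[OF _ thn_out[OF l]])
      qed
      then show "\<exists>c' F. f = Dia c' F \<and> c' < a \<and> der rc ?H f" using dec fe by blast
    qed
    have "der rc ?H (Dia a (Conj (sub A z) (bigconj (?f ` Inh rc S A z))))"
      by (rule J_big[OF finite_imageI[OF Inh_fin[OF Suc.prems]] 1 2])
    then show "der rc ?H (Dia a (Conj (sub A z) (Gs rc S A (Suc m) z)))" by (simp only: Gs_Suc)
  qed
qed

primrec fdepth :: "'p fm \<Rightarrow> nat" where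
  "fdepth (Var p) = 0"
| "fdepth Top = 0"
| "fdepth (Conj A B) = max (fdepth A) (fdepth B)"
| "fdepth (Dia a A) = Suc (fdepth A)"

lemma truth: "finite S \<Longrightarrow> y \<in> tnodes A \<Longrightarrow> forces (Chr rc S A) (tval A) y B \<Longrightarrow> fdepth B \<le> n
  \<Longrightarrow> der rc (thn (Gs rc S A n) A y) B"
proof (induction B arbitrary: y n)
  case (Var p)
  then show ?case by (simp add: thn_var)
next
  case Top
  then show ?case by (simp add: der_top)
next
  case (Conj B1 B2)
  then show ?case by (simp add: der_conjI)
next
  case (Dia c B)
  obtain m where n: "n = Suc m" using Dia.prems(4) by (cases n) auto
  obtain u where u: "(y,u) \<in> Chr rc S A c" "forces (Chr rc S A) (tval A) u B" using Dia.prems(3) by auto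
  have un: "u \<in> tnodes A" using Chr_nodes u(1) by blast
  have ih: "der rc (thn (Gs rc S A m) A u) B" using Dia.IH[OF Dia.prems(1) un u(2)] Dia.prems(4) n by simp
  obtain w l1 l2 where w: "c \<in> S" "w \<in> tnodes A" "tpath A w y l1" "\<forall>l\<in>set l1. c < l"
      "tpath A w u l2" "good rc c l2"
    using u(1) unfolding Chr_def by blast
  show ?case
  proof (cases "l1 = []")
    case True
    then have "w = y" using w(3) by simp
    then have 1: "der rc (thn (Gs rc S A n) A y) (Dia c (thn (Gs rc S A n) A u))" using thn_out w by blast
    have "der rc (thn (Gs rc S A n) A u) (thn (Gs rc S A m) A u)"
      using thn_mono Gs_mono[OF Dia.prems(1)] n by blast
    then have "der rc (thn (Gs rc S A n) A u) B" by (rule der_cut[OF _ ih])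
    then show ?thesis by (rule der_cut[OF 1 der_mono])
  next
    case False
    then have cu: "(c,u) \<in> Inh rc S A y" unfolding Inh_def using w by blast
    then have "Dia c (thn (Gs rc S A m) A u) \<in> (\<lambda>(c,u). Dia c (thn (Gs rc S A m) A u)) ` Inh rc S A y" by force
    then have "der rc (Gs rc S A n y) (Dia c (thn (Gs rc S A m) A u))"
      unfolding n Gs_Suc by (rule bigconj_mem[OF finite_imageI[OF Inh_fin[OF Dia.prems(1)]]])
    then have "der rc (thn (Gs rc S A n) A y) (Dia c (thn (Gs rc S A m) A u))" by (rule der_cut[OF thn_G])
    then show ?thesis by (rule der_cut[OF _ der_mono[OF ih]])
  qed
qed

lemma completeness: "finite S \<Longrightarrow> forces (Chr rc S A) (tval A) [] B \<Longrightarrow> der rc A B"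
proof -
  assume f: "finite S" and fo: "forces (Chr rc S A) (tval A) [] B"
  let ?n = "fdepth B"
  have g: "der rc A (Gs rc S A ?n [])"
  proof (cases ?n)
    case 0 then show ?thesis by (simp add: der_top)
  next
    case (Suc k) then show ?thesis by (simp add: Gs_Suc Inh_root bigconj_intro)
  qed
  have "der rc A (Conj (sub A []) (Gs rc S A ?n []))" using der_conjI[OF der_refl g] by simp
  then have "der rc A (thn (Gs rc S A ?n) A [])" by (rule der_cut[OF _ claim[OF f]])
  then show ?thesis by (rule der_cut[OF _ truth[OF f tn_root fo le_refl]])
qed




context
  fixes S :: "enat set" and M :: "enat \<Rightarrow> ('w \<times> 'w) set"
  assumes fr: "RC_frame S M" and fin: "finite S"
begin

lemma Mc: "a \<in> S \<Longrightarrow> b \<in> S \<Longrightarrow> (x,y) \<in> M a \<Longrightarrow> (y,z) \<in> M b \<Longrightarrow> (x,z) \<in> M (min a b)"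
  using fr unfolding RC_frame_def RJ_frame_def by blast
lemma MJ: "a \<in> S \<Longrightarrow> b \<in> S \<Longrightarrow> b < a \<Longrightarrow> (x,y) \<in> M a \<Longrightarrow> (x,z) \<in> M b \<Longrightarrow> (y,z) \<in> M b"
  using fr unfolding RC_frame_def RJ_frame_def by blast
lemma Mm: "a \<in> S \<Longrightarrow> b \<in> S \<Longrightarrow> b < a \<Longrightarrow> (x,y) \<in> M a \<Longrightarrow> (x,y) \<in> M b"
  using fr unfolding RC_frame_def by blast
lemma Mt: "a \<in> S \<Longrightarrow> (x,y) \<in> M a \<Longrightarrow> (y,z) \<in> M a \<Longrightarrow> (x,z) \<in> M a"
  using Mc[of a a x y z] by simp

definition Q :: "enat \<Rightarrow> ('w \<times> 'w) set" where
  "Q b = {(x,y). (x,y) \<in> M b \<and> (\<forall>z. (x,z) \<in> M b \<longrightarrow> (y,z) \<in> M b)}"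

lemma Q1: "(x,y) \<in> Q b \<Longrightarrow> (x,y) \<in> M b" unfolding Q_def by blast
lemma Q2: "b \<in> S \<Longrightarrow> s \<in> S \<Longrightarrow> b < s \<Longrightarrow> (x,y) \<in> M s \<Longrightarrow> (x,y) \<in> Q b"
  unfolding Q_def using Mm MJ by blast
lemma Q3: "b \<in> S \<Longrightarrow> (x,y) \<in> Q b \<Longrightarrow> (x,z) \<in> Q b \<Longrightarrow> (y,z) \<in> Q b"
  unfolding Q_def using Mt by blast
lemma Q4: "b \<in> S \<Longrightarrow> s \<in> S \<Longrightarrow> b < s \<Longrightarrow> (x,y) \<in> M s \<Longrightarrow> (x,z) \<in> Q b \<Longrightarrow> (y,z) \<in> Q b"
proof -
  assume a: "b \<in> S" "s \<in> S" "b < s" "(x,y) \<in> M s" "(x,z) \<in> Q b"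
  have "(y,z) \<in> M b" using a MJ Q1 by blast
  moreover have "(z,w) \<in> M b" if "(y,w) \<in> M b" for w
  proof -
    have "(x,w) \<in> M (min s b)" using Mc[OF a(2) a(1) a(4) that] .
    moreover have "min s b = b" using a(3) by (simp add: min.absorb2 less_imp_le)
    ultimately have "(x,w) \<in> M b" by simp
    then show ?thesis using a(5) unfolding Q_def by blast
  qed
  ultimately show ?thesis unfolding Q_def by blast
qed
lemma Q5: "(x,y) \<in> Q b \<Longrightarrow> (x,z) \<in> M b \<Longrightarrow> (y,z) \<in> M b" unfolding Q_def by blast
lemma QQ: "b \<in> S \<Longrightarrow> (x,y) \<in> Q b \<Longrightarrow> (y,z) \<in> Q b \<Longrightarrow> (x,z) \<in> Q b"
  unfolding Q_def using Mt by blast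
lemma QM: "b \<in> S \<Longrightarrow> s \<in> S \<Longrightarrow> b < s \<Longrightarrow> (x,y) \<in> Q b \<Longrightarrow> (y,z) \<in> M s \<Longrightarrow> (x,z) \<in> Q b"
proof -
  assume a: "b \<in> S" "s \<in> S" "b < s" "(x,y) \<in> Q b" "(y,z) \<in> M s"
  have "(x,z) \<in> M (min b s)" using Mc[OF a(1) a(2) Q1[OF a(4)] a(5)] .
  moreover have "min b s = b" using a(3) by (simp add: min.absorb1 less_imp_le)
  ultimately have xz: "(x,z) \<in> M b" by simp
  moreover have "(z,w) \<in> M b" if "(x,w) \<in> M b" for w
  proof -
    have "(y,w) \<in> M b" using Q5[OF a(4) that] .
    then show ?thesis using MJ[OF a(2) a(1) a(3) a(5)] by blast
  qed
  ultimately show ?thesis unfolding Q_def by blast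
qed
lemma MQ: "b \<in> S \<Longrightarrow> s \<in> S \<Longrightarrow> b < s \<Longrightarrow> (x,y) \<in> M s \<Longrightarrow> (y,z) \<in> Q b \<Longrightarrow> (x,z) \<in> Q b"
proof -
  assume a: "b \<in> S" "s \<in> S" "b < s" "(x,y) \<in> M s" "(y,z) \<in> Q b"
  have "(x,z) \<in> M (min s b)" using Mc[OF a(2) a(1) a(4) Q1[OF a(5)]] .
  moreover have "min s b = b" using a(3) by (simp add: min.absorb2 less_imp_le)
  ultimately have xz: "(x,z) \<in> M b" by simp
  moreover have "(z,w) \<in> M b" if "(x,w) \<in> M b" for w
  proof -
    have "(y,w) \<in> M b" using MJ[OF a(2) a(1) a(3) a(4) that] .
    then show ?thesis using Q5[OF a(5)] by blast
  qed
  ultimately show ?thesis unfolding Q_def by blast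
qed

definition pv :: "enat \<Rightarrow> enat" where "pv c = Max {s\<in>S. s < c}"

lemma pv1: "s \<in> S \<Longrightarrow> s < c \<Longrightarrow> pv c \<in> S \<and> pv c < c \<and> s \<le> pv c"
proof -
  assume "s \<in> S" "s < c"
  then have ne: "{s\<in>S. s < c} \<noteq> {}" and f: "finite {s\<in>S. s < c}" using fin by auto
  have "pv c \<in> {s\<in>S. s < c}" unfolding pv_def using Max_in[OF f ne] .
  moreover have "s \<le> pv c" unfolding pv_def using Max_ge[OF f] \<open>s \<in> S\<close> \<open>s < c\<close> by blast
  ultimately show ?thesis by blast
qed

definition E :: "enat \<Rightarrow> ('w \<times> 'w) set" where
  "E c = (if c \<in> S then M c else if (\<exists>s\<in>S. s < c) then Q (pv c) else UNIV)"

lemma E_low: "\<not> (\<exists>s\<in>S. s < c) \<Longrightarrow> c \<notin> S \<Longrightarrow> d \<le> c \<Longrightarrow> E d = UNIV"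
proof -
  assume a: "\<not> (\<exists>s\<in>S. s < c)" "c \<notin> S" "d \<le> c"
  have "d \<notin> S" using a by (metis order.not_eq_order_implies_strict)
  moreover have "\<not> (\<exists>s\<in>S. s < d)" using a by (meson less_le_trans)
  ultimately show ?thesis unfolding E_def by simp
qed

lemma E_mono: "d < c \<Longrightarrow> (x,y) \<in> E c \<Longrightarrow> (x,y) \<in> E d"
proof -
  assume dc: "d < c" and xy: "(x,y) \<in> E c"
  show ?thesis
  proof (cases "d \<in> S")
    case dS: True
    show ?thesis
    proof (cases "c \<in> S")
      case True then show ?thesis using xy dS dc Mm unfolding E_def by simp
    next
      case False
      then have pc: "pv c \<in> S" "pv c < c" "d \<le> pv c" using pv1[OF dS dc] by auto
      have "\<exists>s\<in>S. s < c" using dS dc by blast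
      then have "(x,y) \<in> M (pv c)" using xy False Q1 unfolding E_def by auto
      then show ?thesis using pc dS Mm unfolding E_def
        by (cases "d = pv c") (auto simp: order.order_iff_strict)
    qed
  next
    case dN: False
    show ?thesis
    proof (cases "\<exists>s\<in>S. s < d")
      case False then show ?thesis using dN unfolding E_def by simp
    next
      case True
      then obtain s where s: "s \<in> S" "s < d" by blast
      have pd: "pv d \<in> S" "pv d < d" using pv1[OF s] by auto
      have Ed: "E d = Q (pv d)" using dN True unfolding E_def by simp
      show ?thesis
      proof (cases "c \<in> S")
        case True
        then show ?thesis using xy Ed Q2[OF pd(1) True] pd(2) dc unfolding E_def by simp
      next
        case cN: False
        have sc: "s < c" using s(2) dc by (rule less_trans)
        have pc: "pv c \<in> S" "pv c < c" using pv1[OF s(1) sc] by auto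
        have "pv d \<le> pv c" using pv1[OF pd(1)] pd(2) dc by (meson less_trans)
        moreover have Ec: "E c = Q (pv c)" using cN s sc unfolding E_def by auto
        ultimately show ?thesis using xy Ed Q1 Q2 pd(1) pc(1)
          by (cases "pv d = pv c") (auto simp: order.order_iff_strict)
      qed
    qed
  qed
qed


lemma E_S: "c \<in> S \<Longrightarrow> E c = M c" unfolding E_def by simp
lemma E_gap: "c \<notin> S \<Longrightarrow> s \<in> S \<Longrightarrow> s < c \<Longrightarrow> E c = Q (pv c)" unfolding E_def by auto

lemma pv_le: "s \<in> S \<Longrightarrow> s < d \<Longrightarrow> d \<le> c \<Longrightarrow> pv d \<le> pv c"
proof -
  assume a: "s \<in> S" "s < d" "d \<le> c"
  have 1: "pv d \<in> S" "pv d < d" using pv1[OF a(1,2)] by auto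
  then have "pv d < c" using a(3) by (meson less_le_trans)
  then show ?thesis using pv1[OF 1(1)] by blast
qed

lemma E_J: "d < c \<Longrightarrow> (x,y) \<in> E c \<Longrightarrow> (x,z) \<in> E d \<Longrightarrow> (y,z) \<in> E d"
proof -
  assume dc: "d < c" and xy: "(x,y) \<in> E c" and xz: "(x,z) \<in> E d"
  show ?thesis
  proof (cases "d \<in> S")
    case dS: True
    show ?thesis
    proof (cases "c \<in> S")
      case True
      have "(x,y) \<in> M c" "(x,z) \<in> M d" using xy xz dS True by (simp_all add: E_S)
      then have "(y,z) \<in> M d" by (rule MJ[OF True dS dc])
      then show ?thesis using dS by (simp add: E_S)
    next
      case False
      have pc: "pv c \<in> S" "pv c < c" "d \<le> pv c" using pv1[OF dS dc] by auto
      have q: "(x,y) \<in> Q (pv c)" using xy E_gap[OF False dS dc] by simp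
      have xz': "(x,z) \<in> M d" using xz dS by (simp add: E_S)
      show ?thesis
      proof (cases "d = pv c")
        case True
        have "(y,z) \<in> M d" using Q5[OF q] xz' True by simp
        then show ?thesis using dS by (simp add: E_S)
      next
        case False
        then have "d < pv c" using pc(3) by (simp add: order.order_iff_strict)
        have "(y,z) \<in> M d" by (rule MJ[OF pc(1) dS \<open>d < pv c\<close> Q1[OF q] xz'])
        then show ?thesis using dS by (simp add: E_S)
      qed
    qed
  next
    case dN: False
    show ?thesis
    proof (cases "\<exists>s\<in>S. s < d")
      case False then show ?thesis using dN unfolding E_def by simp
    next
      case True
      then obtain s where s: "s \<in> S" "s < d" by blast
      have pd: "pv d \<in> S" "pv d < d" using pv1[OF s] by auto
      have Ed: "E d = Q (pv d)" using E_gap[OF dN s] .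
      show ?thesis
      proof (cases "c \<in> S")
        case True
        have lt: "pv d < c" using pd(2) dc by (rule less_trans)
        have xyM: "(x,y) \<in> M c" using xy True by (simp add: E_S)
        have xzQ: "(x,z) \<in> Q (pv d)" using xz Ed by simp
        show ?thesis using Q4[OF pd(1) True lt xyM xzQ] Ed by simp
      next
        case cN: False
        have sc: "s < c" using s(2) dc by (rule less_trans)
        have pc: "pv c \<in> S" "pv c < c" using pv1[OF s(1) sc] by auto
        have le: "pv d \<le> pv c" using pv_le[OF s less_imp_le[OF dc]] .
        have q: "(x,y) \<in> Q (pv c)" using xy E_gap[OF cN s(1) sc] by simp
        show ?thesis
        proof (cases "pv d = pv c")
          case True
          have "(x,z) \<in> Q (pv d)" using xz Ed by simp
          moreover have "(x,y) \<in> Q (pv d)" using q True by simp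
          ultimately have "(y,z) \<in> Q (pv d)" using Q3[OF pd(1)] by blast
          then show ?thesis using Ed by simp
        next
          case False
          then have "pv d < pv c" using le by (simp add: order.order_iff_strict)
          moreover have "(x,z) \<in> Q (pv d)" using xz Ed by simp
          ultimately have "(y,z) \<in> Q (pv d)" by (rule Q4[OF pd(1) pc(1) _ Q1[OF q]])
          then show ?thesis using Ed by simp
        qed
      qed
    qed
  qed
qed

lemma E_comp: "(x,y) \<in> E c \<Longrightarrow> (y,z) \<in> E d \<Longrightarrow> (x,z) \<in> E (min c d)"
proof -
  assume xy: "(x,y) \<in> E c" and yz: "(y,z) \<in> E d"
  show ?thesis
  proof (cases "(c \<notin> S \<and> \<not> (\<exists>s\<in>S. s < c)) \<or> (d \<notin> S \<and> \<not> (\<exists>s\<in>S. s < d))")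
    case True
    then have "E (min c d) = UNIV"
    proof
      assume "c \<notin> S \<and> \<not> (\<exists>s\<in>S. s < c)"
      then show ?thesis using E_low[of c "min c d"] by simp
    next
      assume "d \<notin> S \<and> \<not> (\<exists>s\<in>S. s < d)"
      then show ?thesis using E_low[of d "min c d"] by simp
    qed
    then show ?thesis by simp
  next
    case False
    then have cc: "c \<in> S \<or> (\<exists>s\<in>S. s < c)" and dd: "d \<in> S \<or> (\<exists>s\<in>S. s < d)" by auto
    show ?thesis
    proof (cases "c \<in> S")
      case cS: True
      show ?thesis
      proof (cases "d \<in> S")
        case True
        have "(x,y) \<in> M c" "(y,z) \<in> M d" using xy yz cS True by (simp_all add: E_S)
        then have "(x,z) \<in> M (min c d)" by (rule Mc[OF cS True])
        moreover have "min c d \<in> S" using cS True by (simp add: min_def)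
        ultimately show ?thesis by (simp add: E_S)
      next
        case dN: False
        then obtain s where s: "s \<in> S" "s < d" using dd by blast
        have pd: "pv d \<in> S" "pv d < d" using pv1[OF s] by auto
        have q: "(y,z) \<in> Q (pv d)" using yz E_gap[OF dN s] by simp
        have xy': "(x,y) \<in> M c" using xy cS by (simp add: E_S)
        show ?thesis
        proof (cases "c < d")
          case True
          then have "c \<le> pv d" using pv1[OF cS True] by simp
          then have "min c (pv d) = c" by simp
          then have "(x,z) \<in> M c" using Mc[OF cS pd(1) xy' Q1[OF q]] by simp
          then show ?thesis using True cS by (simp add: E_S)
        next
          case False
          then have dc: "d < c" using cS dN by (metis linorder_neqE)
          have "pv d < c" using pd(2) dc by (rule less_trans)
          then have "(x,z) \<in> Q (pv d)" by (rule MQ[OF pd(1) cS _ xy' q])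
          then show ?thesis using dc E_gap[OF dN s] by simp
        qed
      qed
    next
      case cN: False
      then obtain s where s: "s \<in> S" "s < c" using cc by blast
      have pc: "pv c \<in> S" "pv c < c" using pv1[OF s] by auto
      have q: "(x,y) \<in> Q (pv c)" using xy E_gap[OF cN s] by simp
      show ?thesis
      proof (cases "d \<in> S")
        case dS: True
        have yz': "(y,z) \<in> M d" using yz dS by (simp add: E_S)
        show ?thesis
        proof (cases "d < c")
          case True
          then have "d \<le> pv c" using pv1[OF dS True] by simp
          then have "min (pv c) d = d" by simp
          then have "(x,z) \<in> M d" using Mc[OF pc(1) dS Q1[OF q] yz'] by simp
          then show ?thesis using True dS by (simp add: E_S)
        next
          case False
          then have cd: "c < d" using cN dS by (metis linorder_neqE)
          have "pv c < d" using pc(2) cd by (rule less_trans)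
          then have "(x,z) \<in> Q (pv c)" by (rule QM[OF pc(1) dS _ q yz'])
          then show ?thesis using cd E_gap[OF cN s] by simp
        qed
      next
        case dN: False
        then obtain s' where s': "s' \<in> S" "s' < d" using dd by blast
        have pd: "pv d \<in> S" "pv d < d" using pv1[OF s'] by auto
        have q': "(y,z) \<in> Q (pv d)" using yz E_gap[OF dN s'] by simp
        show ?thesis
        proof (cases "c \<le> d")
          case True
          have le: "pv c \<le> pv d" using pv_le[OF s True] .
          have "(x,z) \<in> Q (pv c)"
          proof (cases "pv c = pv d")
            case True
            have "(y,z) \<in> Q (pv c)" using q' True by simp
            then show ?thesis by (rule QQ[OF pc(1) q])
          next
            case False
            then have "pv c < pv d" using le by (simp add: order.order_iff_strict)
            then show ?thesis by (rule QM[OF pc(1) pd(1) _ q Q1[OF q']])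
          qed
          then show ?thesis using True E_gap[OF cN s] by (simp add: min_def)
        next
          case False
          then have dc: "d < c" by simp
          have le: "pv d \<le> pv c" using pv_le[OF s' less_imp_le[OF dc]] .
          have "(x,z) \<in> Q (pv d)"
          proof (cases "pv c = pv d")
            case True
            have "(x,y) \<in> Q (pv d)" using q True by simp
            then show ?thesis by (rule QQ[OF pd(1) _ q'])
          next
            case False
            then have "pv d < pv c" using le by (simp add: order.order_iff_strict)
            then show ?thesis by (rule MQ[OF pd(1) pc(1) _ Q1[OF q] q'])
          qed
          moreover have "min c d = d" using dc by simp
          ultimately show ?thesis using E_gap[OF dN s'] by simp
        qed
      qed
    qed
  qed
qed

lemma E_frame: "RC_frame UNIV E"
  unfolding RC_frame_def RJ_frame_def
proof (intro conjI ballI allI impI subsetI)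
  fix a b p assume "p \<in> E a O E b"
  then obtain x y z where "p = (x,z)" "(x,y) \<in> E a" "(y,z) \<in> E b" by blast
  then show "p \<in> E (min a b)" using E_comp by simp
next
  fix a b x y z assume "b < a" "(x, y) \<in> E a \<and> (x, z) \<in> E b"
  then show "(y, z) \<in> E b" using E_J[of b a x y z] by simp
next
  fix a b p assume "b < a" "p \<in> E a"
  then show "p \<in> E b" using E_mono[of b a] by (cases p) simp
qed

end




lemma least_mem: "a \<in> S \<Longrightarrow> p \<in> least_rels P S A a \<longleftrightarrow>
  (\<forall>R'. (\<forall>b\<in>S. trel A b \<subseteq> R' b \<and> R' b \<subseteq> tnodes A \<times> tnodes A) \<and> P S R' \<longrightarrow> p \<in> R' a)"
  unfolding least_rels_def by auto

lemma least_out: "a \<notin> S \<Longrightarrow> least_rels P S A a = {}"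
  unfolding least_rels_def by simp

lemma least_trel: "mods A \<subseteq> S \<Longrightarrow> trel A a \<subseteq> least_rels P S A a"
proof
  fix p assume m: "mods A \<subseteq> S" and p: "p \<in> trel A a"
  then have aS: "a \<in> S" using tr_mods by (cases p) blast
  show "p \<in> least_rels P S A a" using least_mem[OF aS] p aS by blast
qed

lemma least_below: "(\<forall>b\<in>S. trel A b \<subseteq> R' b \<and> R' b \<subseteq> tnodes A \<times> tnodes A) \<Longrightarrow> P S R'
   \<Longrightarrow> least_rels P S A a \<subseteq> R' a"
  by (cases "a \<in> S") (auto simp: least_mem least_out)

lemma least_RJ: "RJ_frame S (least_rels RJ_frame S A)"
proof -
  let ?M = "least_rels RJ_frame S A"
  have 1: "\<forall>a\<in>S. \<forall>b\<in>S. ?M a O ?M b \<subseteq> ?M (min a b)"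
  proof (intro ballI subsetI)
    fix a b p assume ab: "a \<in> S" "b \<in> S" and p: "p \<in> ?M a O ?M b"
    from p obtain x y z where pe: "p = (x,z)" "(x,y) \<in> ?M a" "(y,z) \<in> ?M b" by blast
    have mS: "min a b \<in> S" using ab by (simp add: min_def)
    show "p \<in> ?M (min a b)" unfolding least_mem[OF mS] pe(1)
    proof (intro allI impI)
      fix R' :: "enat \<Rightarrow> (dir list \<times> dir list) set"
      assume R': "(\<forall>b\<in>S. trel A b \<subseteq> R' b \<and> R' b \<subseteq> tnodes A \<times> tnodes A) \<and> RJ_frame S R'"
      have "(x,y) \<in> R' a" using pe(2) R' unfolding least_mem[OF ab(1)] by blast
      moreover have "(y,z) \<in> R' b" using pe(3) R' unfolding least_mem[OF ab(2)] by blast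
      ultimately show "(x,z) \<in> R' (min a b)" using R' ab unfolding RJ_frame_def by blast
    qed
  qed
  have 2: "\<forall>a\<in>S. \<forall>b\<in>S. a > b \<longrightarrow> (\<forall>x y z. (x, y) \<in> ?M a \<and> (x, z) \<in> ?M b \<longrightarrow> (y, z) \<in> ?M b)"
  proof (intro ballI allI impI)
    fix a b x y z assume ab: "a \<in> S" "b \<in> S" "a > b" and h: "(x, y) \<in> ?M a \<and> (x, z) \<in> ?M b"
    show "(y,z) \<in> ?M b" unfolding least_mem[OF ab(2)]
    proof (intro allI impI)
      fix R' :: "enat \<Rightarrow> (dir list \<times> dir list) set"
      assume R': "(\<forall>b\<in>S. trel A b \<subseteq> R' b \<and> R' b \<subseteq> tnodes A \<times> tnodes A) \<and> RJ_frame S R'"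
      have "(x,y) \<in> R' a" using h R' unfolding least_mem[OF ab(1)] by blast
      moreover have "(x,z) \<in> R' b" using h R' unfolding least_mem[OF ab(2)] by blast
      ultimately show "(y,z) \<in> R' b" using R' ab unfolding RJ_frame_def by blast
    qed
  qed
  show ?thesis using 1 2 by (simp add: RJ_frame_def[of S ?M])
qed

lemma least_RC: "RC_frame S (least_rels RC_frame S A)"
proof -
  let ?M = "least_rels RC_frame S A"
  have 1: "\<forall>a\<in>S. \<forall>b\<in>S. ?M a O ?M b \<subseteq> ?M (min a b)"
  proof (intro ballI subsetI)
    fix a b p assume ab: "a \<in> S" "b \<in> S" and p: "p \<in> ?M a O ?M b"
    from p obtain x y z where pe: "p = (x,z)" "(x,y) \<in> ?M a" "(y,z) \<in> ?M b" by blast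
    have mS: "min a b \<in> S" using ab by (simp add: min_def)
    show "p \<in> ?M (min a b)" unfolding least_mem[OF mS] pe(1)
    proof (intro allI impI)
      fix R' :: "enat \<Rightarrow> (dir list \<times> dir list) set"
      assume R': "(\<forall>b\<in>S. trel A b \<subseteq> R' b \<and> R' b \<subseteq> tnodes A \<times> tnodes A) \<and> RC_frame S R'"
      have "(x,y) \<in> R' a" using pe(2) R' unfolding least_mem[OF ab(1)] by blast
      moreover have "(y,z) \<in> R' b" using pe(3) R' unfolding least_mem[OF ab(2)] by blast
      ultimately show "(x,z) \<in> R' (min a b)" using R' ab unfolding RC_frame_def RJ_frame_def by blast
    qed
  qed
  have 2: "\<forall>a\<in>S. \<forall>b\<in>S. a > b \<longrightarrow> (\<forall>x y z. (x, y) \<in> ?M a \<and> (x, z) \<in> ?M b \<longrightarrow> (y, z) \<in> ?M b)"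
  proof (intro ballI allI impI)
    fix a b x y z assume ab: "a \<in> S" "b \<in> S" "a > b" and h: "(x, y) \<in> ?M a \<and> (x, z) \<in> ?M b"
    show "(y,z) \<in> ?M b" unfolding least_mem[OF ab(2)]
    proof (intro allI impI)
      fix R' :: "enat \<Rightarrow> (dir list \<times> dir list) set"
      assume R': "(\<forall>b\<in>S. trel A b \<subseteq> R' b \<and> R' b \<subseteq> tnodes A \<times> tnodes A) \<and> RC_frame S R'"
      have "(x,y) \<in> R' a" using h R' unfolding least_mem[OF ab(1)] by blast
      moreover have "(x,z) \<in> R' b" using h R' unfolding least_mem[OF ab(2)] by blast
      ultimately show "(y,z) \<in> R' b" using R' ab unfolding RC_frame_def RJ_frame_def by blast
    qed
  qed
  have 3: "\<forall>a\<in>S. \<forall>b\<in>S. b < a \<longrightarrow> ?M a \<subseteq> ?M b"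
  proof (intro ballI impI subsetI)
    fix a b p assume ab: "a \<in> S" "b \<in> S" "b < a" and p: "p \<in> ?M a"
    show "p \<in> ?M b" unfolding least_mem[OF ab(2)]
    proof (intro allI impI)
      fix R' :: "enat \<Rightarrow> (dir list \<times> dir list) set"
      assume R': "(\<forall>b\<in>S. trel A b \<subseteq> R' b \<and> R' b \<subseteq> tnodes A \<times> tnodes A) \<and> RC_frame S R'"
      have "p \<in> R' a" using p R' unfolding least_mem[OF ab(1)] by blast
      then show "p \<in> R' b" using R' ab unfolding RC_frame_def by blast
    qed
  qed
  show ?thesis using 1 2 3 by (simp add: RC_frame_def[of S ?M] RJ_frame_def[of S ?M])
qed

lemma sound_RJ: "RJ A B \<Longrightarrow> RJ_frame S Rl \<Longrightarrow> (\<forall>a. a \<notin> S \<longrightarrow> Rl a = {}) \<Longrightarrow> forces Rl V x A \<Longrightarrow> forces Rl V x B"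
proof (induction arbitrary: x rule: RJ.induct)
  case (rj_trans a A)
  then obtain y z where "(x,y) \<in> Rl a" "(y,z) \<in> Rl a" "forces Rl V z A" by auto
  moreover have "a \<in> S" using rj_trans.prems(2) \<open>(x,y) \<in> Rl a\<close> by blast
  ultimately have "(x,z) \<in> Rl (min a a)" using rj_trans.prems(1) unfolding RJ_frame_def by blast
  then show ?case using \<open>forces Rl V z A\<close> by auto
next
  case (rj_mon1 a b A)
  then obtain y z where yz: "(x,y) \<in> Rl a" "(y,z) \<in> Rl b" "forces Rl V z A" by auto
  have "a \<in> S" "b \<in> S" using rj_mon1.prems(2) yz by blast+
  then have "(x,z) \<in> Rl (min a b)" using rj_mon1.prems(1) yz unfolding RJ_frame_def by blast
  moreover have "min a b = b" using rj_mon1.hyps by (simp add: min.absorb2)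
  ultimately show ?case using yz by auto
next
  case (rj_mon2 a b A)
  then obtain y z where yz: "(x,y) \<in> Rl b" "(y,z) \<in> Rl a" "forces Rl V z A" by auto
  have "a \<in> S" "b \<in> S" using rj_mon2.prems(2) yz by blast+
  then have "(x,z) \<in> Rl (min b a)" using rj_mon2.prems(1) yz unfolding RJ_frame_def by blast
  moreover have "min b a = b" using rj_mon2.hyps by (simp add: min.absorb1)
  ultimately show ?case using yz by auto
next
  case (rj_J a b A B)
  then obtain y z where yz: "(x,y) \<in> Rl a" "forces Rl V y A" "(x,z) \<in> Rl b" "forces Rl V z B" by auto
  have "a \<in> S" "b \<in> S" using rj_J.prems(2) yz by blast+
  then have "(y,z) \<in> Rl b" using rj_J.prems(1) yz rj_J.hyps unfolding RJ_frame_def by blast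
  then show ?case using yz by auto
qed auto

lemma sound_RC: "RC A B \<Longrightarrow> RC_frame UNIV Rl \<Longrightarrow> forces Rl V x A \<Longrightarrow> forces Rl V x B"
proof (induction arbitrary: x rule: RC.induct)
  case (rc_trans a A)
  then obtain y z where "(x,y) \<in> Rl a" "(y,z) \<in> Rl a" "forces Rl V z A" by auto
  moreover then have "(x,z) \<in> Rl (min a a)" using rc_trans.prems(1) unfolding RC_frame_def RJ_frame_def by blast
  ultimately show ?case by auto
next
  case (rc_mon1 a b A)
  then obtain y z where yz: "(x,y) \<in> Rl a" "(y,z) \<in> Rl b" "forces Rl V z A" by auto
  then have "(x,z) \<in> Rl (min a b)" using rc_mon1.prems(1) unfolding RC_frame_def RJ_frame_def by blast
  moreover have "min a b = b" using rc_mon1.hyps by (simp add: min.absorb2)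
  ultimately show ?case using yz by auto
next
  case (rc_mon2 a b A)
  then obtain y z where yz: "(x,y) \<in> Rl b" "(y,z) \<in> Rl a" "forces Rl V z A" by auto
  then have "(x,z) \<in> Rl (min b a)" using rc_mon2.prems(1) unfolding RC_frame_def RJ_frame_def by blast
  moreover have "min b a = b" using rc_mon2.hyps by (simp add: min.absorb1)
  ultimately show ?case using yz by auto
next
  case (rc_J a b A B)
  then obtain y z where yz: "(x,y) \<in> Rl a" "forces Rl V y A" "(x,z) \<in> Rl b" "forces Rl V z B" by auto
  then have "(y,z) \<in> Rl b" using rc_J.prems(1) rc_J.hyps unfolding RC_frame_def RJ_frame_def by blast
  then show ?case using yz by auto
next
  case (rc_C a b A)
  then obtain y where y: "(x,y) \<in> Rl a" "forces Rl V y A" by auto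
  then have "(x,y) \<in> Rl b" using rc_C.prems(1) rc_C.hyps unfolding RC_frame_def by blast
  then show ?case using y by auto
qed auto

lemma forces_mono: "(\<forall>a. Rl a \<subseteq> Rl2 a) \<Longrightarrow> forces Rl V x F \<Longrightarrow> forces Rl2 V x F"
  by (induction F arbitrary: x) auto

lemma forces_cong: "(\<forall>a\<in>mods F. Rl a = Rl2 a) \<Longrightarrow> forces Rl V x F = forces Rl2 V x F"
  by (induction F arbitrary: x) auto

lemma forces_embL: "forces (trel B) (tval B) x F \<Longrightarrow> forces (trel (Conj B C)) (tval (Conj B C)) (emb L x) F"
proof (induction F arbitrary: x)
  case (Dia a F)
  then obtain y where "(x,y) \<in> trel B a" "forces (trel B) (tval B) y F" by auto
  moreover then have "(emb L x, emb L y) \<in> trel (Conj B C) a" by force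
  ultimately show ?case using Dia.IH by auto
qed auto

lemma forces_embR: "forces (trel C) (tval C) x F \<Longrightarrow> forces (trel (Conj B C)) (tval (Conj B C)) (emb R x) F"
proof (induction F arbitrary: x)
  case (Dia a F)
  then obtain y where "(x,y) \<in> trel C a" "forces (trel C) (tval C) y F" by auto
  moreover then have "(emb R x, emb R y) \<in> trel (Conj B C) a" by force
  ultimately show ?case using Dia.IH by auto
qed auto

lemma forces_embD: "forces (trel B) (tval B) x F \<Longrightarrow> forces (trel (Dia b B)) (tval (Dia b B)) (D # x) F"
proof (induction F arbitrary: x)
  case (Dia a F)
  then obtain y where "(x,y) \<in> trel B a" "forces (trel B) (tval B) y F" by auto
  moreover then have "(D # x, D # y) \<in> trel (Dia b B) a" by force
  ultimately show ?case using Dia.IH by auto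
qed auto

lemma forces_tree: "forces (trel A) (tval A) [] A"
proof (induction A)
  case (Conj B C)
  have 1: "forces (trel (Conj B C)) (tval (Conj B C)) [] B"
    using forces_embL[OF Conj.IH(1), of C] unfolding emb_nil .
  have 2: "forces (trel (Conj B C)) (tval (Conj B C)) [] C"
    using forces_embR[OF Conj.IH(2), of B] unfolding emb_nil .
  show ?case unfolding forces.simps(3) using 1 2 by blast
next
  case (Dia b B)
  have 1: "forces (trel (Dia b B)) (tval (Dia b B)) [D] B" using forces_embD[OF Dia.IH, of b] .
  have e: "([],[D]) \<in> trel (Dia b B) b" by simp
  show ?case unfolding forces.simps(4) using e 1 by blast
qed auto




lemma Chr_fam: "\<forall>b\<in>S. trel A b \<subseteq> Chr rc S A b \<and> Chr rc S A b \<subseteq> tnodes A \<times> tnodes A"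
proof (intro ballI conjI)
  fix b assume "b \<in> S"
  then show "trel A b \<subseteq> Chr rc S A b" by (rule Chr_trel)
  show "Chr rc S A b \<subseteq> tnodes A \<times> tnodes A"
  proof
    fix p assume "p \<in> Chr rc S A b"
    then show "p \<in> tnodes A \<times> tnodes A" using Chr_nodes by (cases p) simp
  qed
qed

theorem theorem5p2:
  fixes A B :: "'p fm"
  shows "(RJ A B \<longleftrightarrow> forces (RJ_model_rel (mods A) A) (tval A) [] B)
       \<and> (RC A B \<longleftrightarrow> forces (RC_model_rel (mods A \<union> mods B) A) (tval A) [] B)"
proof
  let ?S = "mods A"
  let ?M = "least_rels RJ_frame ?S A"
  have tr: "\<forall>a. trel A a \<subseteq> ?M a" using least_trel[OF subset_refl] by blast
  have MA: "forces ?M (tval A) [] A" by (rule forces_mono[OF tr forces_tree])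
  have below: "\<forall>a. ?M a \<subseteq> Chr False ?S A a"
  proof
    fix a show "?M a \<subseteq> Chr False ?S A a"
      by (rule least_below[where P=RJ_frame, OF Chr_fam[of "?S" A False] Chr_RJ])
  qed
  have emp: "\<forall>a. a \<notin> ?S \<longrightarrow> ?M a = {}" by (simp add: least_out)
  show "RJ A B \<longleftrightarrow> forces (RJ_model_rel (mods A) A) (tval A) [] B"
    unfolding RJ_model_rel_def
  proof
    assume "RJ A B"
    then show "forces ?M (tval A) [] B" by (rule sound_RJ[OF _ least_RJ emp MA])
  next
    assume "forces ?M (tval A) [] B"
    then have "forces (Chr False ?S A) (tval A) [] B" by (rule forces_mono[OF below])
    then have "der False A B" by (rule completeness[OF mods_fin])
    then show "RJ A B" by (simp add: der_def)
  qed
next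
  let ?S = "mods A \<union> mods B"
  let ?M = "least_rels RC_frame ?S A"
  have fin: "finite ?S" using mods_fin by blast
  have frM: "RC_frame ?S ?M" by (rule least_RC)
  have tr: "\<forall>a. trel A a \<subseteq> ?M a" using least_trel[OF Un_upper1] by blast
  have below: "\<forall>a. ?M a \<subseteq> Chr True ?S A a"
  proof
    fix a show "?M a \<subseteq> Chr True ?S A a"
      by (rule least_below[where P=RC_frame, OF Chr_fam[of "?S" A True] Chr_RC])
  qed
  show "RC A B \<longleftrightarrow> forces (RC_model_rel ?S A) (tval A) [] B"
    unfolding RC_model_rel_def
  proof
    assume rc: "RC A B"
    let ?E = "E ?S ?M"
    have frE: "RC_frame UNIV ?E" by (rule E_frame[OF frM fin])
    have ES: "a \<in> ?S \<Longrightarrow> ?E a = ?M a" for a by (rule E_S[OF frM fin])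
    have "\<forall>a. trel A a \<subseteq> ?E a"
    proof
      fix a show "trel A a \<subseteq> ?E a"
      proof (cases "a \<in> mods A")
        case True
        then have "?E a = ?M a" using ES by simp
        then show ?thesis using tr by simp
      next
        case False
        have "trel A a = {}"
        proof (rule ccontr)
          assume "trel A a \<noteq> {}"
          then obtain p where "p \<in> trel A a" by blast
          then show False using tr_mods False by (cases p) blast
        qed
        then show ?thesis by simp
      qed
    qed
    then have "forces ?E (tval A) [] A" by (rule forces_mono[OF _ forces_tree])
    then have EB: "forces ?E (tval A) [] B" by (rule sound_RC[OF rc frE])
    have "\<forall>a\<in>mods B. ?E a = ?M a" using ES by simp
    then have "forces ?E (tval A) [] B = forces ?M (tval A) [] B" by (rule forces_cong)
    then show "forces ?M (tval A) [] B" using EB by simp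
  next
    assume "forces ?M (tval A) [] B"
    then have "forces (Chr True ?S A) (tval A) [] B" by (rule forces_mono[OF below])
    then have "der True A B" by (rule completeness[OF fin])
    then show "RC A B" by (simp add: der_def)
  qed
qed


end
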